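(* Fix $x\in\mathbb{R}^d$, $\alpha\in\mathbb{R}$, and $0<\sigma_{\min}<\sigma_{\max}$. Let $\mathcal{P}_H$ be the law of $\varphi(x+N_H)$ with $N_H\sim\mathcal{N}(0,\sigma_{\min}^2 I_d)$ and $\mathcal{P}_L$ the law of $\varphi(x+N_L)$ with $N_L\sim\mathcal{N}(0,\sigma_{\max}^2 I_d)$. Then, with $r=\sigma_{\min}/\sigma_{\max}<1$, $$D_{\mathrm{KL}}(\mathcal{P}_L\,\|\,\mathcal{P}_H)\ \ge\ \frac{d}{2}\left(r^2-2\ln r-1\right).$$
   Context: $\varphi:\mathbb{R}^d\to\mathbb{R}^{2d}$ (Reverse Manifold Embedding) sends $x=(x_1,\dots,x_d)$ to the vector consisting of the pairs $(x_j\cos(\alpha x_j),\,x_j\sin(\alpha x_j))$, $j=1,\dots,d$. In the paper, $\sigma_{\min}$ and $\sigma_{\max}$ are the Gaussian noise levels at trust scores $\mathcal{T}=0$ and $\mathcal{T}=1$ respectively. $D_{\mathrm{KL}}$ denotes Kullback–Leibler divergence. *)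

theory Defs
  imports "HOL-Probability.Probability"
begin

definition rme :: "real \<Rightarrow> real ^ 'd \<Rightarrow> real ^ ('d + 'd)" where
  "rme \<alpha> x = (\<chi> k. case k of Inl j \<Rightarrow> x $ j * cos (\<alpha> * x $ j)
                              | Inr j \<Rightarrow> x $ j * sin (\<alpha> * x $ j))"

definition gauss_vec :: "real ^ 'd \<Rightarrow> real \<Rightarrow> (real ^ 'd) measure" where
  "gauss_vec x \<sigma> = density lborel (\<lambda>y. ennreal (\<Prod>j\<in>UNIV. normal_density (x $ j) \<sigma> (y $ j)))"

definition rme_law :: "real \<Rightarrow> real ^ 'd \<Rightarrow> real \<Rightarrow> (real ^ ('d + 'd)) measure" where
  "rme_law \<alpha> x \<sigma> = distr (gauss_vec x \<sigma>) borel (rme \<alpha>)"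

text \<open>D_KL(P || Q) in nats; note the library's argument order KL_divergence b Q P.\<close>
definition D_KL :: "'a measure \<Rightarrow> 'a measure \<Rightarrow> real" where
  "D_KL P Q = KL_divergence (exp 1) Q P"

end

theory Submission
  imports Defs
begin


lemma Basis_vec_real: "(Basis :: (real^'d) set) = range (\<lambda>j. axis j 1)"
  by (auto simp: Basis_vec_def)

lemma borel_measurable_vec_real:
  fixes f :: "'a \<Rightarrow> real^'d"
  assumes "\<And>j. (\<lambda>x. f x $ j) \<in> borel_measurable M"
  shows "f \<in> borel_measurable M"
  using assms by (subst borel_measurable_euclidean_space) (auto simp: Basis_vec_real inner_axis)

lemma rme_meas[measurable]: "rme \<alpha> \<in> borel_measurable (borel :: (real^'d) measure)"
  unfolding rme_def 
  apply (rule borel_measurable_vec_real) 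
  subgoal for j by (cases j) auto
  done

lemma nn_integral_vec_prod:
  fixes f :: "'d::finite \<Rightarrow> real \<Rightarrow> ennreal"
  assumes [measurable]: "\<And>j. f j \<in> borel_measurable borel"
  shows "(\<integral>\<^sup>+y. (\<Prod>j\<in>UNIV. f j (y $ j)) \<partial>(lborel :: (real^'d) measure)) = (\<Prod>j\<in>UNIV. (\<integral>\<^sup>+t. f j t \<partial>lborel))"
proof -
  define g where "g b = f (SOME j. b = axis j (1::real))" for b :: "real^'d"
  have ax: "g (axis j 1) = f j" for j
    unfolding g_def by (rule arg_cong[where f=f]) (metis (mono_tags, lifting) axis_eq_axis one_neq_zero someI_ex)
  have inj: "inj (\<lambda>j::'d. axis j (1::real))" by (auto simp: inj_def axis_eq_axis)
  have "(\<Prod>j\<in>UNIV. f j (y $ j)) = (\<Prod>b\<in>Basis. g b (y \<bullet> b))" for y :: "real^'d"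
    unfolding Basis_vec_real by (subst prod.reindex[OF inj]) (simp add: ax inner_axis)
  moreover have "(\<Prod>j\<in>UNIV. (\<integral>\<^sup>+t. f j t \<partial>lborel)) = (\<Prod>b\<in>(Basis::(real^'d) set). (\<integral>\<^sup>+t. g b t \<partial>lborel))"
    unfolding Basis_vec_real by (subst prod.reindex[OF inj]) (simp add: ax)
  moreover have "(\<integral>\<^sup>+y. (\<Prod>b\<in>Basis. g b (y \<bullet> b)) \<partial>(lborel :: (real^'d) measure)) = (\<Prod>b\<in>Basis. (\<integral>\<^sup>+t. g b t \<partial>lborel))"
  proof (rule nn_integral_lborel_prod)
    fix b :: "real^'d" assume "b \<in> Basis"
    then obtain j where "b = axis j 1" by (auto simp: Basis_vec_real)
    then show "g b \<in> borel_measurable borel" using ax by auto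
  qed auto
  ultimately show ?thesis by simp
qed

lemma hyp_AE:
  fixes c :: real and j :: "'d::finite"
  shows "AE y in (lborel :: (real^'d) measure). y $ j \<noteq> c"
proof -
  have "{y::real^'d. y $ j = c} \<in> sets borel" by measurable
  have "emeasure lborel {y::real^'d. y $ j = c} = (\<integral>\<^sup>+y. indicator {y::real^'d. y $ j = c} y \<partial>lborel)"
    by simp
  also have "\<dots> = (\<integral>\<^sup>+y. (\<Prod>i\<in>UNIV. (if i = j then indicator {c} else (\<lambda>_. 1)) (y $ i)) \<partial>(lborel :: (real^'d) measure))"
  proof (rule nn_integral_cong)
    fix y :: "real^'d"
    show "indicator {y::real^'d. y $ j = c} y = (\<Prod>i\<in>UNIV. (if i = j then indicator {c} else (\<lambda>_. 1 :: ennreal)) (y $ i))"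
    proof (cases "y $ j = c")
      case True then show ?thesis by (subst prod.neutral) (auto simp: indicator_def)
    next
      case False then show ?thesis by (subst prod_zero) (auto intro!: bexI[where x=j])
    qed
  qed
  also have "\<dots> = (\<Prod>i\<in>UNIV. (\<integral>\<^sup>+t. (if i = j then indicator {c} else (\<lambda>_. 1)) t \<partial>lborel))"
    by (rule nn_integral_vec_prod) auto
  also have "\<dots> = 0"
    by (rule prod_zero) (auto intro!: bexI[where x=j])
  finally show ?thesis
    by (intro AE_I[where N="{y::real^'d. y $ j = c}"]) auto
qed

lemma ineq_aux:
  fixes s :: real assumes "1 \<le> s" shows "2 * ln s \<le> s - 1 / s"
proof -
  let ?F = "\<lambda>s::real. s - 1/s - 2 * ln s"
  have "?F 1 \<le> ?F s"
  proof (rule DERIV_nonneg_imp_nondecreasing[OF assms])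
    fix y :: real assume y: "1 \<le> y" "y \<le> s"
    show "\<exists>D. (?F has_real_derivative D) (at y) \<and> 0 \<le> D"
    proof (intro exI conjI)
      show "(?F has_real_derivative (1 + 1/y^2 - 2/y)) (at y)"
        using y by (auto intro!: derivative_eq_intros simp: field_simps power2_eq_square)
      have "1 + 1/y^2 - 2/y = (1 - 1/y)^2" using y by (simp add: field_simps power2_eq_square)
      then show "0 \<le> 1 + 1/y^2 - 2/y" by simp
    qed
  qed
  then show ?thesis by simp
qed

lemma final_ineq:
  fixes r :: real assumes "0 < r" "r < 1"
  shows "(r^2 - 2 * ln r - 1) / 2 \<le> ln r + (1 / r^2 - 1) / 2"
proof -
  have "1 \<le> 1 / r^2" using assms by (simp add: field_simps power_le_one)
  from ineq_aux[OF this] have "2 * ln (1 / r^2) \<le> 1 / r^2 - r^2" by simp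
  moreover have "ln (1 / r^2) = - 2 * ln r" using assms by (simp add: ln_div ln_realpow)
  ultimately have "- 4 * ln r \<le> 1 / r^2 - r^2" by simp
  moreover have "(1 / r^2 - 1) / 2 = 1 / (2 * r^2) - 1/2" by (simp add: field_simps)
  ultimately show ?thesis by (simp add: diff_divide_distrib)
qed

definition psi1 :: "real \<Rightarrow> real \<Rightarrow> real \<Rightarrow> real" where
  "psi1 \<alpha> a b = (let rr = sqrt (a^2 + b^2) in
     if rr * cos (\<alpha> * rr) = a \<and> rr * sin (\<alpha> * rr) = b then rr else - rr)"

lemma psi1_meas[measurable]:
  assumes [measurable]: "f \<in> borel_measurable M" "g \<in> borel_measurable M"
  shows "(\<lambda>z. psi1 \<alpha> (f z) (g z)) \<in> borel_measurable M"
  unfolding psi1_def Let_def by measurable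

lemma psi1_inv:
  assumes "cos (\<alpha> * t) \<noteq> 0"
  shows "psi1 \<alpha> (t * cos (\<alpha> * t)) (t * sin (\<alpha> * t)) = t"
proof -
  have "(t * cos (\<alpha> * t))^2 + (t * sin (\<alpha> * t))^2 = t^2"
    by (simp add: power_mult_distrib algebra_simps flip: distrib_left)
  then have sq: "sqrt ((t * cos (\<alpha> * t))^2 + (t * sin (\<alpha> * t))^2) = \<bar>t\<bar>" by simp
  show ?thesis
  proof (cases "0 \<le> t")
    case True then show ?thesis unfolding psi1_def Let_def sq by simp
  next
    case False
    then have "\<not> (- t * cos (\<alpha> * - t) = t * cos (\<alpha> * t))" using assms by simp
    then show ?thesis using False unfolding psi1_def Let_def sq by auto
  qed
qed

lemma cos_AE:
  "AE y in (lborel :: (real^'d::finite) measure). \<forall>j. cos (\<alpha> * y $ j) \<noteq> 0"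
proof (cases "\<alpha> = 0")
  case True then show ?thesis by simp
next
  case False
  have "AE y in (lborel :: (real^'d::finite) measure). \<forall>j. \<forall>i::int. y $ j \<noteq> of_int i * (pi/2) / \<alpha>"
    by (subst AE_all_countable, intro allI, subst AE_all_countable, intro allI, rule hyp_AE)
  then show ?thesis
  proof (rule AE_mp, intro AE_I2 impI allI notI)
    fix y :: "real^'d" and j
    assume H: "\<forall>j. \<forall>i::int. y $ j \<noteq> of_int i * (pi/2) / \<alpha>" and "cos (\<alpha> * y $ j) = 0"
    then obtain i where "\<alpha> * y $ j = of_int i * (pi/2)" by (auto simp: cos_zero_iff_int)
    then have "y $ j = of_int i * (pi/2) / \<alpha>" using False by (simp add: field_simps)
    with H show False by blast
  qed
qed


definition fd :: "real^'d \<Rightarrow> real \<Rightarrow> real^'d \<Rightarrow> real" where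
  "fd x \<sigma> y = (\<Prod>j\<in>UNIV. normal_density (x $ j) \<sigma> (y $ j))"

lemma fd_meas[measurable]: "fd x \<sigma> \<in> borel_measurable borel"
  unfolding fd_def by measurable

lemma fd_nn: "0 \<le> fd x \<sigma> y" unfolding fd_def by (simp add: prod_nonneg)

lemma fd_pos: "0 < \<sigma> \<Longrightarrow> 0 < fd x \<sigma> y" unfolding fd_def by (simp add: prod_pos normal_density_pos)

lemma nn1: "0 < \<sigma> \<Longrightarrow> (\<integral>\<^sup>+t. ennreal (normal_density \<mu> \<sigma> t) \<partial>lborel) = 1"
  by (subst nn_integral_eq_integral) auto

lemma nn2: "0 < \<sigma> \<Longrightarrow> (\<integral>\<^sup>+t. ennreal (normal_density \<mu> \<sigma> t * (t - \<mu>)^2) \<partial>lborel) = ennreal (\<sigma>^2)"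
proof -
  assume s: "0 < \<sigma>"
  have "integrable lborel (\<lambda>t. normal_density \<mu> \<sigma> t * (t - \<mu>)^2)"
    using integrable_normal_moment[OF s, of \<mu> 2] .
  moreover have "(\<integral>t. normal_density \<mu> \<sigma> t * (t - \<mu>)^2 \<partial>lborel) = \<sigma>^2"
    using integral_normal_moment_even[OF s, of \<mu> 1] by simp
  ultimately show ?thesis by (subst nn_integral_eq_integral) auto
qed

lemma nn_fd: "0 < \<sigma> \<Longrightarrow> (\<integral>\<^sup>+y. ennreal (fd x \<sigma> y) \<partial>(lborel :: (real^'d::finite) measure)) = 1"
proof -
  assume s: "0 < \<sigma>"
  have "(\<integral>\<^sup>+y. ennreal (fd x \<sigma> y) \<partial>(lborel :: (real^'d::finite) measure)) =
        (\<integral>\<^sup>+y. (\<Prod>j\<in>UNIV. (\<lambda>j t. ennreal (normal_density (x $ j) \<sigma> t)) j (y $ j)) \<partial>lborel)"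
    unfolding fd_def by (simp add: prod_ennreal)
  also have "\<dots> = (\<Prod>j\<in>UNIV. (\<integral>\<^sup>+t. ennreal (normal_density (x $ j) \<sigma> t) \<partial>lborel))"
    by (rule nn_integral_vec_prod) auto
  also have "\<dots> = 1" using s by (simp add: nn1)
  finally show ?thesis .
qed

lemma nn_fd_sq: "0 < \<sigma> \<Longrightarrow> (\<integral>\<^sup>+y. ennreal (fd x \<sigma> y * (y $ k - x $ k)^2) \<partial>(lborel :: (real^'d::finite) measure)) = ennreal (\<sigma>^2)"
proof -
  assume s: "0 < \<sigma>"
  let ?g = "\<lambda>j t. ennreal (normal_density (x $ j) \<sigma> t * (if j = k then (t - x $ k)^2 else 1))"
  have "(\<integral>\<^sup>+y. ennreal (fd x \<sigma> y * (y $ k - x $ k)^2) \<partial>(lborel :: (real^'d::finite) measure)) =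
        (\<integral>\<^sup>+y. (\<Prod>j\<in>UNIV. ?g j (y $ j)) \<partial>lborel)"
  proof (rule nn_integral_cong)
    fix y :: "real^'d"
    have "(\<Prod>j\<in>UNIV. ?g j (y $ j)) = ennreal (\<Prod>j\<in>UNIV. normal_density (x $ j) \<sigma> (y $ j) * (if j = k then (y $ k - x $ k)^2 else 1))"
      by (subst prod_ennreal) (auto intro!: arg_cong[where f=ennreal] prod.cong)
    also have "(\<Prod>j\<in>UNIV. normal_density (x $ j) \<sigma> (y $ j) * (if j = k then (y $ k - x $ k)^2 else 1)) = fd x \<sigma> y * (y $ k - x $ k)^2"
      unfolding fd_def prod.distrib by (simp add: prod.delta)
    finally show "ennreal (fd x \<sigma> y * (y $ k - x $ k)^2) = (\<Prod>j\<in>UNIV. ?g j (y $ j))" by simp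
  qed
  also have "\<dots> = (\<Prod>j\<in>UNIV. (\<integral>\<^sup>+t. ?g j t \<partial>lborel))"
    by (rule nn_integral_vec_prod) auto
  also have "\<dots> = (\<Prod>j\<in>UNIV. (if j = k then ennreal (\<sigma>^2) else 1))"
    by (rule prod.cong) (use s in \<open>auto simp: nn1 nn2\<close>)
  also have "\<dots> = ennreal (\<sigma>^2)" by (simp add: prod.delta)
  finally show ?thesis .
qed

lemma int_fd: "0 < \<sigma> \<Longrightarrow> integrable (lborel :: (real^'d::finite) measure) (fd x \<sigma>) \<and> (\<integral>y. fd x \<sigma> y \<partial>lborel) = 1"
  using nn_fd[of \<sigma> x] 
  by (auto intro!: integrableI_nonneg simp: fd_nn integral_eq_nn_integral)

lemma int_fd_sq: "0 < \<sigma> \<Longrightarrow> integrable (lborel :: (real^'d::finite) measure) (\<lambda>y. fd x \<sigma> y * (y $ k - x $ k)^2) \<and> (\<integral>y. fd x \<sigma> y * (y $ k - x $ k)^2 \<partial>lborel) = \<sigma>^2"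
  using nn_fd_sq[of \<sigma> x k] 
  by (auto intro!: integrableI_nonneg simp: fd_nn integral_eq_nn_integral)



definition Qf :: "real^'d \<Rightarrow> real \<Rightarrow> real \<Rightarrow> real^'d \<Rightarrow> real" where
  "Qf x r c y = (\<Prod>j\<in>UNIV. r * exp (c * (y $ j - x $ j)^2))"

definition hf :: "real \<Rightarrow> real^'d \<Rightarrow> real \<Rightarrow> real \<Rightarrow> real^('d+'d) \<Rightarrow> real" where
  "hf \<alpha> x r c z = (\<Prod>j\<in>UNIV. r * exp (c * (psi1 \<alpha> (z $ Inl j) (z $ Inr j) - x $ j)^2))"

lemma hf_meas[measurable]: "hf \<alpha> x r c \<in> borel_measurable borel"
  unfolding hf_def by measurable

lemma hf_nn: "0 \<le> r \<Longrightarrow> 0 \<le> hf \<alpha> x r c z"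
  unfolding hf_def by (simp add: prod_nonneg)

lemma Qf_meas[measurable]: "Qf x r c \<in> borel_measurable borel"
  unfolding Qf_def by measurable

lemma hf_rme: "(\<forall>j. cos (\<alpha> * y $ j) \<noteq> 0) \<Longrightarrow> hf \<alpha> x r c (rme \<alpha> y) = Qf x r c y"
  unfolding hf_def Qf_def rme_def by (simp add: psi1_inv)

lemma ratio1:
  assumes "0 < u" "u < v"
  shows "normal_density \<mu> u t * ((u / v) * exp ((1/(2 * u^2) - 1/(2 * v^2)) * (t - \<mu>)^2)) = normal_density \<mu> v t"
proof -
  have v: "0 < v" using assms by simp
  have sq: "sqrt (2 * pi * s^2) = sqrt (2 * pi) * s" if "0 < s" for s :: real
    using that by (simp add: real_sqrt_mult)
  have e: "exp (- ((t - \<mu>)^2) / (2 * u^2)) * exp ((1/(2 * u^2) - 1/(2 * v^2)) * (t - \<mu>)^2) = exp (- ((t - \<mu>)^2) / (2 * v^2))"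
    unfolding exp_add[symmetric] using assms v by (simp add: field_simps)
  have "normal_density \<mu> u t * ((u / v) * exp ((1/(2 * u^2) - 1/(2 * v^2)) * (t - \<mu>)^2))
      = (1 / (sqrt (2 * pi) * u)) * (u / v) * (exp (- ((t - \<mu>)^2) / (2 * u^2)) * exp ((1/(2 * u^2) - 1/(2 * v^2)) * (t - \<mu>)^2))"
    unfolding normal_density_def sq[OF assms(1)] by (simp add: ac_simps)
  also have "\<dots> = (1 / (sqrt (2 * pi) * v)) * exp (- ((t - \<mu>)^2) / (2 * v^2))"
    unfolding e using assms by simp
  also have "\<dots> = normal_density \<mu> v t"
    unfolding normal_density_def sq[OF v] ..
  finally show ?thesis .
qed

lemma ratio:
  assumes "0 < u" "u < v"
  shows "fd x u y * Qf x (u / v) (1/(2 * u^2) - 1/(2 * v^2)) y = fd x v y"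
  unfolding fd_def Qf_def prod.distrib[symmetric] using ratio1[OF assms] by simp

lemma ln_Qf:
  fixes x :: "real^'d::finite"
  assumes "0 < r"
  shows "ln (Qf x r c y) = real CARD('d::finite) * ln r + (\<Sum>j\<in>UNIV. c * (y $ j - x $ j)^2)"
  unfolding Qf_def using assms
  by (simp add: ln_prod ln_mult sum.distrib)



theorem mainTheorem2:
  fixes x :: "real ^ 'd" and \<alpha> \<sigma>\<^sub>m\<^sub>i\<^sub>n \<sigma>\<^sub>m\<^sub>a\<^sub>x :: real
  assumes "0 < \<sigma>\<^sub>m\<^sub>i\<^sub>n" and "\<sigma>\<^sub>m\<^sub>i\<^sub>n < \<sigma>\<^sub>m\<^sub>a\<^sub>x"
  shows "D_KL (rme_law \<alpha> x \<sigma>\<^sub>m\<^sub>a\<^sub>x) (rme_law \<alpha> x \<sigma>\<^sub>m\<^sub>i\<^sub>n)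
           \<ge> real CARD('d) / 2 *
              ((\<sigma>\<^sub>m\<^sub>i\<^sub>n / \<sigma>\<^sub>m\<^sub>a\<^sub>x)\<^sup>2 - 2 * ln (\<sigma>\<^sub>m\<^sub>i\<^sub>n / \<sigma>\<^sub>m\<^sub>a\<^sub>x) - 1)"
proof -
  define u where "u = \<sigma>\<^sub>m\<^sub>i\<^sub>n"
  define v where "v = \<sigma>\<^sub>m\<^sub>a\<^sub>x"
  have u: "0 < u" and uv: "u < v" using assms by (simp_all add: u_def v_def)
  have v: "0 < v" using u uv by simp
  define r where "r = u / v"
  define c where "c = 1/(2 * u^2) - 1/(2 * v^2)"
  have r: "0 < r" "r < 1" using u uv by (simp_all add: r_def)
  define h where "h = hf \<alpha> x r c"
  define PH where "PH = rme_law \<alpha> x u"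
  define PL where "PL = rme_law \<alpha> x v"
  define GH where "GH = gauss_vec x u"
  have GH_eq: "GH = density lborel (fd x u)" unfolding GH_def gauss_vec_def fd_def ..
  have GL_eq: "gauss_vec x v = density lborel (fd x v)" unfolding gauss_vec_def fd_def ..
  have PH_eq: "PH = distr GH borel (rme \<alpha>)" unfolding PH_def GH_def rme_law_def ..
  have [measurable]: "h \<in> borel_measurable borel" unfolding h_def by measurable
  have sGH[simp]: "sets GH = sets borel" unfolding GH_eq by simp
  have sPH[simp]: "sets PH = sets borel" unfolding PH_eq by simp
  have rmeGH[measurable]: "rme \<alpha> \<in> measurable GH borel"
    by (simp add: measurable_cong_sets[OF sGH refl])
  have AEc: "AE y in GH. \<forall>j. cos (\<alpha> * y $ j) \<noteq> 0"
    unfolding GH_eq by (rule AE_density[THEN iffD2]) (auto intro: AE_mp[OF cos_AE])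
  have AEh: "AE y in GH. h (rme \<alpha> y) = Qf x r c y"
    using AEc by eventually_elim (simp add: h_def hf_rme)
  have hPH: "h \<in> borel_measurable PH" by (simp add: measurable_cong_sets[OF sPH refl])
  have hnn: "\<And>z. 0 \<le> h z" unfolding h_def using r by (simp add: hf_nn)
  have "prob_space GH"
    by (rule prob_spaceI) (simp add: GH_eq emeasure_density nn_fd[OF u])
  then have "prob_space PH" unfolding PH_eq by (rule prob_space.prob_space_distr) simp
  then interpret PH: prob_space PH .
  have PL_dens: "PL = density PH h"
  proof -
    have "density PH h = distr (density GH (\<lambda>y. h (rme \<alpha> y))) borel (rme \<alpha>)"
      unfolding PH_eq by (rule density_distr) auto
    also have "density GH (\<lambda>y. h (rme \<alpha> y)) = density lborel (\<lambda>y. ennreal (fd x u y) * ennreal (h (rme \<alpha> y)))"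
      unfolding GH_eq by (rule density_density_eq) auto
    also have "\<dots> = density lborel (fd x v)"
    proof (rule density_cong)
      show "AE y in lborel. ennreal (fd x u y) * ennreal (h (rme \<alpha> y)) = ennreal (fd x v y)"
        using cos_AE[of \<alpha>] 
      proof eventually_elim
        case (elim y)
        then have "h (rme \<alpha> y) = Qf x r c y" by (simp add: h_def hf_rme)
        moreover have "0 \<le> Qf x r c y" unfolding Qf_def using r by (simp add: prod_nonneg)
        ultimately show ?case using ratio[OF u uv, of x y] fd_nn[of x u y]
          by (simp add: r_def c_def flip: ennreal_mult)
      qed
    qed auto
    finally show ?thesis unfolding PL_def rme_law_def GL_eq by simp
  qed
  have "D_KL PL PH = KL_divergence (exp 1) PH (density PH h)"
    unfolding D_KL_def PL_dens ..
  also have "\<dots> = (\<integral>z. h z * log (exp 1) (h z) \<partial>PH)"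
    by (rule PH.KL_density) (use hPH hnn in auto)
  also have "\<dots> = (\<integral>z. h z * ln (h z) \<partial>PH)" by (simp add: log_def)
  also have "\<dots> = (\<integral>y. h (rme \<alpha> y) * ln (h (rme \<alpha> y)) \<partial>GH)"
    unfolding PH_eq by (rule integral_distr) auto
  also have "\<dots> = (\<integral>y. Qf x r c y * ln (Qf x r c y) \<partial>GH)"
    by (rule integral_cong_AE) (use AEh in \<open>auto simp: measurable_cong_sets[OF sGH refl]\<close>)
  also have "\<dots> = (\<integral>y. fd x u y * (Qf x r c y * ln (Qf x r c y)) \<partial>lborel)"
    unfolding GH_eq by (subst integral_density) (auto simp: fd_nn)
  also have "\<dots> = (\<integral>y. real CARD('d) * ln r * fd x v y + (\<Sum>j\<in>UNIV. c * (fd x v y * (y $ j - x $ j)^2)) \<partial>lborel)"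
  proof (rule Bochner_Integration.integral_cong[OF refl])
    fix y :: "real^'d"
    have "fd x u y * (Qf x r c y * ln (Qf x r c y)) = fd x v y * ln (Qf x r c y)"
      using ratio[OF u uv, of x y] by (simp add: r_def c_def mult.assoc[symmetric])
    then show "fd x u y * (Qf x r c y * ln (Qf x r c y)) = real CARD('d) * ln r * fd x v y + (\<Sum>j\<in>UNIV. c * (fd x v y * (y $ j - x $ j)^2))"
      by (simp add: ln_Qf[OF r(1)] distrib_left sum_distrib_left algebra_simps)
  qed
  also have "\<dots> = real CARD('d) * ln r * 1 + (\<Sum>j\<in>(UNIV::'d set). c * v^2)"
  proof -
    have i1: "integrable lborel (fd x v)" and e1: "(\<integral>y. fd x v y \<partial>lborel) = 1"
      using int_fd[OF v, of x] by auto
    have i2: "\<And>k. integrable lborel (\<lambda>y. fd x v y * (y $ k - x $ k)^2)"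
      and e2: "\<And>k. (\<integral>y. fd x v y * (y $ k - x $ k)^2 \<partial>lborel) = v^2"
      using int_fd_sq[OF v, of x] by auto
    have "(\<integral>y. real CARD('d) * ln r * fd x v y + (\<Sum>j\<in>UNIV. c * (fd x v y * (y $ j - x $ j)^2)) \<partial>lborel)
       = (\<integral>y. real CARD('d) * ln r * fd x v y \<partial>lborel) + (\<integral>y. (\<Sum>j\<in>UNIV. c * (fd x v y * (y $ j - x $ j)^2)) \<partial>lborel)"
      by (rule Bochner_Integration.integral_add) (auto intro!: integrable_mult_right i1 integrable_sum i2)
    also have "\<dots> = real CARD('d) * ln r * 1 + (\<Sum>j\<in>(UNIV::'d set). c * v^2)"
      by (subst Bochner_Integration.integral_sum) (auto intro!: integrable_mult_right i2 simp: e1 e2)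
    finally show ?thesis .
  qed
  also have "\<dots> = real CARD('d) * (ln r + (1 / r^2 - 1) / 2)"
    using u v by (simp add: r_def c_def field_simps power2_eq_square)
  finally have KL: "D_KL PL PH = real CARD('d) * (ln r + (1 / r^2 - 1) / 2)" .
  have "real CARD('d) / 2 * (r^2 - 2 * ln r - 1) = real CARD('d) * ((r^2 - 2 * ln r - 1) / 2)" by simp
  also have "\<dots> \<le> real CARD('d) * (ln r + (1 / r^2 - 1) / 2)"
    by (rule mult_left_mono[OF final_ineq[OF r]]) simp
  finally show ?thesis using KL unfolding PL_def PH_def r_def u_def v_def by simp
qed

end
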